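(* Let $G$ be a finite connected graph with chromatic number $\chi$, let $c$ be a nice $\chi$-coloring of $G$, and let $(V^c_1,\dots,V^c_k)$ be the level partition of $D_c$. Let $B_c$ be the set of vertices $x$ of $G$ such that there is no colorful path (with respect to $c$) starting at $x$. Then $B_c\subseteq V^c_2\cup V^c_3\cup\dots\cup V^c_{\chi-1}$.
   Context: A proper $\chi$-coloring is a map $c:V(G)\to\{1,\dots,\chi\}$ with adjacent vertices receiving different colors; colors are considered modulo $\chi$. A colorful path is a path on $\chi$ distinct vertices of $G$ whose colors are pairwise distinct. $D_c$ is the oriented graph on $V(G)$ with an arc $ab$ if and only if $\{a,b\}\in E(G)$ and $c(b)\equiv c(a)+1\pmod{\chi}$. The coloring $c$ is nice if $D_c$ is acyclic and has exactly one sink (vertex of out-degree $0$). For an acyclic oriented graph $D$, the level partition is the unique partition $(V_1,\dots,V_k)$ of $V(D)$ such that $V_i$ is the set of sinks of the subdigraph of $D$ induced on $V(D)\setminus(V_1\cup\dots\cup V_{i-1})$. *)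

theory Defs
  imports Main
begin

definition graph :: "'a set \<Rightarrow> ('a \<Rightarrow> 'a \<Rightarrow> bool) \<Rightarrow> bool" where
  "graph V E \<longleftrightarrow> finite V \<and> (\<forall>u v. E u v \<longrightarrow> u \<in> V \<and> v \<in> V)
     \<and> (\<forall>u v. E u v \<longrightarrow> E v u) \<and> (\<forall>u. \<not> E u u)"

definition connected_graph :: "'a set \<Rightarrow> ('a \<Rightarrow> 'a \<Rightarrow> bool) \<Rightarrow> bool" where
  "connected_graph V E \<longleftrightarrow> graph V E \<and> V \<noteq> {} \<and> (\<forall>u\<in>V. \<forall>v\<in>V. E\<^sup>*\<^sup>* u v)"

definition proper_coloring :: "'a set \<Rightarrow> ('a \<Rightarrow> 'a \<Rightarrow> bool) \<Rightarrow> nat \<Rightarrow> ('a \<Rightarrow> nat) \<Rightarrow> bool" where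
  "proper_coloring V E k c \<longleftrightarrow> (\<forall>v\<in>V. c v \<in> {1..k}) \<and> (\<forall>u v. E u v \<longrightarrow> c u \<noteq> c v)"

definition chromatic_number :: "'a set \<Rightarrow> ('a \<Rightarrow> 'a \<Rightarrow> bool) \<Rightarrow> nat" where
  "chromatic_number V E = (LEAST k. \<exists>c. proper_coloring V E k c)"

definition colorful_path_from ::
  "'a set \<Rightarrow> ('a \<Rightarrow> 'a \<Rightarrow> bool) \<Rightarrow> nat \<Rightarrow> ('a \<Rightarrow> nat) \<Rightarrow> 'a \<Rightarrow> 'a list \<Rightarrow> bool" where
  "colorful_path_from V E \<chi> c x p \<longleftrightarrow>
     length p = \<chi> \<and> distinct p \<and> set p \<subseteq> V \<and> p \<noteq> [] \<and> hd p = x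
     \<and> (\<forall>i. Suc i < length p \<longrightarrow> E (p ! i) (p ! Suc i))
     \<and> distinct (map c p)"

definition Dc_arc :: "('a \<Rightarrow> 'a \<Rightarrow> bool) \<Rightarrow> nat \<Rightarrow> ('a \<Rightarrow> nat) \<Rightarrow> 'a \<Rightarrow> 'a \<Rightarrow> bool" where
  "Dc_arc E \<chi> c a b \<longleftrightarrow> E a b \<and> c b mod \<chi> = (c a + 1) mod \<chi>"

definition sinks_in :: "('a \<Rightarrow> 'a \<Rightarrow> bool) \<Rightarrow> 'a set \<Rightarrow> 'a set" where
  "sinks_in A S = {v \<in> S. \<not> (\<exists>w\<in>S. A v w)}"

definition nice_coloring :: "'a set \<Rightarrow> ('a \<Rightarrow> 'a \<Rightarrow> bool) \<Rightarrow> nat \<Rightarrow> ('a \<Rightarrow> nat) \<Rightarrow> bool" where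
  "nice_coloring V E \<chi> c \<longleftrightarrow> proper_coloring V E \<chi> c
     \<and> acyclic {(a, b). a \<in> V \<and> b \<in> V \<and> Dc_arc E \<chi> c a b}
     \<and> card (sinks_in (Dc_arc E \<chi> c) V) = 1"

text \<open>Level partition: remaining A V i = V minus V_1 .. V_i; level A V i = V_i (i \<ge> 1).
  Levels beyond the last nonempty one are empty.\<close>
fun remaining :: "('a \<Rightarrow> 'a \<Rightarrow> bool) \<Rightarrow> 'a set \<Rightarrow> nat \<Rightarrow> 'a set" where
  "remaining A V 0 = V"
| "remaining A V (Suc i) = remaining A V i - sinks_in A (remaining A V i)"

definition level :: "('a \<Rightarrow> 'a \<Rightarrow> bool) \<Rightarrow> 'a set \<Rightarrow> nat \<Rightarrow> 'a set" where
  "level A V i = sinks_in A (remaining A V (i - 1))"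

end

theory Submission
  imports Defs
begin

lemma remaining_sub_V: "remaining A V n \<subseteq> V"
  by (induction n) auto

lemma remaining_anti: "m \<le> n \<Longrightarrow> remaining A V n \<subseteq> remaining A V m"
proof (induction n)
  case 0 then show ?case by simp
next
  case (Suc n)
  then show ?case by (cases "m = Suc n") auto
qed

lemma level_sub_rem: "i \<ge> 1 \<Longrightarrow> level A V i \<subseteq> remaining A V (i - 1)"
  by (auto simp: level_def sinks_in_def)

lemma level_sub_V: "level A V i \<subseteq> V"
  using remaining_sub_V by (fastforce simp: level_def sinks_in_def)

lemma level_disj:
  assumes "1 \<le> i" "i < j" "x \<in> level A V i" "x \<in> level A V j"
  shows False
proof -
  have "x \<in> remaining A V (j - 1)" using assms level_sub_rem[of j A V] by auto
  moreover have "i \<le> j - 1" using assms by simp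
  ultimately have "x \<in> remaining A V i" using remaining_anti[of i "j - 1" A V] by blast
  moreover have "i = Suc (i - 1)" using assms by simp
  ultimately show False using assms(3)
    by (metis DiffE level_def remaining.simps(2))
qed

lemma sinks_nonempty:
  assumes "finite V" "acyclic {(a, b). a \<in> V \<and> b \<in> V \<and> A a b}" "S \<subseteq> V" "S \<noteq> {}"
  shows "sinks_in A S \<noteq> {}"
proof -
  let ?R = "{(a, b). a \<in> V \<and> b \<in> V \<and> A a b}"
  have "?R \<subseteq> V \<times> V" by auto
  then have "finite ?R" using assms(1) by (meson finite_SigmaI finite_subset)
  then have "wf (?R\<inverse>)" using assms(2) by (rule finite_acyclic_wf_converse)
  then obtain x where x: "x \<in> S" "\<And>y. (y, x) \<in> ?R\<inverse> \<Longrightarrow> y \<notin> S"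
    using assms(4) by (rule wfE_min') blast
  have "x \<in> sinks_in A S" unfolding sinks_in_def
  proof (intro CollectI conjI notI)
    show "x \<in> S" by (rule x(1))
    assume "\<exists>w\<in>S. A x w"
    then obtain w where "w \<in> S" "A x w" by blast
    then have "(w, x) \<in> ?R\<inverse>" using assms(3) x(1) by auto
    then show False using x(2) \<open>w \<in> S\<close> by blast
  qed
  then show ?thesis by auto
qed

lemma rem_card:
  assumes "finite V" "acyclic {(a, b). a \<in> V \<and> b \<in> V \<and> A a b}" "v \<in> remaining A V n"
  shows "card (remaining A V n) + n \<le> card V"
  using assms(3)
proof (induction n)
  case 0 then show ?case by simp
next
  case (Suc n)
  have vn: "v \<in> remaining A V n" using Suc.prems by auto
  have IH: "card (remaining A V n) + n \<le> card V" using Suc.IH vn .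
  have fin: "finite (remaining A V n)" using remaining_sub_V assms(1) finite_subset by metis
  have ne: "sinks_in A (remaining A V n) \<noteq> {}"
    using sinks_nonempty[OF assms(1,2) remaining_sub_V] vn by blast
  have "remaining A V (Suc n) \<subset> remaining A V n"
    using ne by (auto simp: sinks_in_def)
  then have "card (remaining A V (Suc n)) < card (remaining A V n)"
    using fin by (simp add: psubset_card_mono)
  then show ?case using IH by simp
qed

lemma eventually_out:
  assumes "finite V" "acyclic {(a, b). a \<in> V \<and> b \<in> V \<and> A a b}"
  shows "v \<notin> remaining A V (card V)"
proof
  assume v: "v \<in> remaining A V (card V)"
  have fin: "finite (remaining A V (card V))"
    using assms(1) remaining_sub_V finite_subset by metis
  have "card (remaining A V (card V)) > 0"
    using fin v card_gt_0_iff by blast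
  moreover have "card (remaining A V (card V)) + card V \<le> card V"
    by (rule rem_card[OF assms v])
  ultimately show False by linarith
qed

lemma find_level:
  assumes "v \<in> remaining A V m" "v \<notin> remaining A V n"
  shows "\<exists>j. m < j \<and> v \<in> level A V j"
  using assms(2)
proof (induction n)
  case 0 then show ?case using assms(1) remaining_sub_V[of A V m] by auto
next
  case (Suc n)
  show ?case
  proof (cases "v \<in> remaining A V n")
    case True
    have "m \<le> n"
    proof (rule ccontr)
      assume "\<not> m \<le> n"
      then have "remaining A V m \<subseteq> remaining A V (Suc n)" by (intro remaining_anti) simp
      then show False using assms(1) Suc.prems by auto
    qed
    moreover have "v \<in> level A V (Suc n)" using True Suc.prems by (auto simp: level_def)
    ultimately show ?thesis by (intro exI[of _ "Suc n"]) auto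
  next
    case False then show ?thesis using Suc.IH by blast
  qed
qed

lemma chain0:
  assumes "x \<in> level A V (Suc i)"
  shows "\<exists>p. length p = Suc i \<and> hd p = x \<and> (\<forall>j<Suc i. p ! j \<in> level A V (Suc i - j))
           \<and> (\<forall>j. Suc j < Suc i \<longrightarrow> A (p ! j) (p ! Suc j))"
  using assms
proof (induction i arbitrary: x)
  case 0
  then show ?case by (intro exI[of _ "[x]"]) auto
next
  case (Suc i)
  have xs: "x \<in> sinks_in A (remaining A V (Suc i))" using Suc.prems by (simp add: level_def)
  have "x \<in> remaining A V i" "x \<notin> sinks_in A (remaining A V i)"
    using xs by (auto simp: sinks_in_def)
  then obtain w where w: "w \<in> remaining A V i" "A x w" by (auto simp: sinks_in_def)
  have "w \<notin> remaining A V (Suc i)" using xs w by (auto simp: sinks_in_def)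
  then have wl: "w \<in> level A V (Suc i)" using w by (auto simp: level_def)
  obtain q where q: "length q = Suc i" "hd q = w" "\<forall>j<Suc i. q ! j \<in> level A V (Suc i - j)"
    "\<forall>j. Suc j < Suc i \<longrightarrow> A (q ! j) (q ! Suc j)" using Suc.IH[OF wl] by auto
  have qne: "q \<noteq> []" using q(1) by auto
  have h1: "(x # q) ! j \<in> level A V (Suc (Suc i) - j)" if "j < Suc (Suc i)" for j
  proof (cases j)
    case 0 then show ?thesis using Suc.prems by simp
  next
    case (Suc k) then show ?thesis using q(3) that by simp
  qed
  have h2: "A ((x # q) ! j) ((x # q) ! Suc j)" if "Suc j < Suc (Suc i)" for j
  proof (cases j)
    case 0 then show ?thesis using w(2) q(2) qne by (simp add: hd_conv_nth)
  next
    case (Suc k) then show ?thesis using q(4) that by simp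
  qed
  show ?case
    apply (rule exI[of _ "x # q"])
    using h1 h2 q(1) by simp
qed

lemma chain:
  assumes "x \<in> level A V i" "i \<ge> 1"
  shows "\<exists>p. length p = i \<and> hd p = x \<and> (\<forall>j<i. p ! j \<in> level A V (i - j))
           \<and> (\<forall>j. Suc j < i \<longrightarrow> A (p ! j) (p ! Suc j))"
proof -
  obtain k where k: "i = Suc k" using assms(2) by (cases i) auto
  show ?thesis unfolding k by (rule chain0) (use assms(1) k in simp)
qed

lemma mod_inj_aux: "(a + j1) mod n = (a + j2) mod (n::nat) \<Longrightarrow> j1 \<le> j2 \<Longrightarrow> j2 < n \<Longrightarrow> j1 = j2"
proof -
  assume h: "(a + j1) mod n = (a + j2) mod (n::nat)" "j1 \<le> j2" "j2 < n"
  have "n dvd (a + j2) - (a + j1)" using h(1,2) mod_eq_dvd_iff_nat[of "a + j1" "a + j2" n] by simp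
  then have "n dvd j2 - j1" by simp
  moreover have "j2 - j1 < n" using h by simp
  ultimately have "j2 - j1 = 0" using dvd_imp_le by (metis not_gr0 le_less_trans less_irrefl)
  then show "j1 = j2" using h(2) by simp
qed

lemma mod_inj: "(a + j1) mod n = (a + j2) mod (n::nat) \<Longrightarrow> j1 < n \<Longrightarrow> j2 < n \<Longrightarrow> j1 = j2"
  using mod_inj_aux[of a j1 n j2] mod_inj_aux[of a j2 n j1] by (cases "j1 \<le> j2") auto

lemma chain_colors:
  assumes "\<forall>j. Suc j < length p \<longrightarrow> Dc_arc E \<chi> c (p ! j) (p ! Suc j)"
  shows "j < length p \<Longrightarrow> c (p ! j) mod \<chi> = (c (p ! 0) + j) mod \<chi>"
proof (induction j)
  case 0 then show ?case by simp
next
  case (Suc j)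
  then have a: "c (p ! Suc j) mod \<chi> = (c (p ! j) + 1) mod \<chi>"
    using assms by (simp add: Dc_arc_def)
  have "c (p ! j) mod \<chi> = (c (p ! 0) + j) mod \<chi>" using Suc by simp
  then show ?case using a by (metis Suc_eq_plus1 add.assoc mod_add_left_eq)
qed

lemma good_path:
  assumes pc: "proper_coloring V E \<chi> c"
    and len: "length p = \<chi>" and m: "m \<ge> \<chi>"
    and lv: "\<forall>j<\<chi>. p ! j \<in> level (Dc_arc E \<chi> c) V (m - j)"
    and arcs: "\<forall>j. Suc j < length p \<longrightarrow> Dc_arc E \<chi> c (p ! j) (p ! Suc j)"
  shows "distinct p" "set p \<subseteq> V" "distinct (map c p)"
    "\<forall>j. Suc j < length p \<longrightarrow> E (p ! j) (p ! Suc j)"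
proof -
  show "\<forall>j. Suc j < length p \<longrightarrow> E (p ! j) (p ! Suc j)"
    using arcs by (simp add: Dc_arc_def)
  show sV: "set p \<subseteq> V"
  proof
    fix y assume "y \<in> set p"
    then obtain j where j: "j < length p" "y = p ! j" unfolding in_set_conv_nth by blast
    have "j < \<chi>" using j(1) len by simp
    then have "y \<in> level (Dc_arc E \<chi> c) V (m - j)" using lv j(2) by blast
    then show "y \<in> V" using level_sub_V[of "Dc_arc E \<chi> c" V "m - j"] by (rule subsetD[rotated])
  qed
  show "distinct p"
  proof (subst distinct_conv_nth, intro allI impI)
    fix i j assume h: "i < length p" "j < length p" "i \<noteq> j"
    show "p ! i \<noteq> p ! j"
    proof
      assume eq: "p ! i = p ! j"
      show False
      proof (cases "i < j")
        case True
        have a: "p ! i \<in> level (Dc_arc E \<chi> c) V (m - i)" using lv h len by simp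
        have b: "p ! i \<in> level (Dc_arc E \<chi> c) V (m - j)" using lv h len eq by simp
        have "1 \<le> m - j" "m - j < m - i" using True h len m by linarith+
        then show False using level_disj a b by metis
      next
        case False
        then have "j < i" using h by simp
        have a: "p ! i \<in> level (Dc_arc E \<chi> c) V (m - i)" using lv h len by simp
        have b: "p ! i \<in> level (Dc_arc E \<chi> c) V (m - j)" using lv h len eq by simp
        have "1 \<le> m - i" "m - i < m - j" using \<open>j < i\<close> h len m by linarith+
        then show False using level_disj a b by metis
      qed
    qed
  qed
  show "distinct (map c p)"
  proof (subst distinct_conv_nth, intro allI impI)
    fix i j assume h: "i < length (map c p)" "j < length (map c p)" "i \<noteq> j"
    show "map c p ! i \<noteq> map c p ! j"
    proof
      assume eq: "map c p ! i = map c p ! j"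
      then have "c (p ! i) mod \<chi> = c (p ! j) mod \<chi>" using h by simp
      then have "(c (p ! 0) + i) mod \<chi> = (c (p ! 0) + j) mod \<chi>"
        using chain_colors[OF arcs, of i] chain_colors[OF arcs, of j] h by simp
      moreover have "i < \<chi>" "j < \<chi>" using h len by auto
      ultimately have "i = j" by (rule mod_inj)
      then show False using h by simp
    qed
  qed
qed

fun W :: "('a \<Rightarrow> 'a \<Rightarrow> bool) \<Rightarrow> 'a set \<Rightarrow> nat \<Rightarrow> ('a \<Rightarrow> nat) \<Rightarrow> nat \<Rightarrow> 'a set" where
  "W E V \<chi> c 0 = {v \<in> V. c v = \<chi>}"
| "W E V \<chi> c (Suc n) = {v \<in> V. c v = \<chi> - Suc n \<and> (\<exists>u\<in>W E V \<chi> c n. E v u)}"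

lemma W_sub: "v \<in> W E V \<chi> c n \<Longrightarrow> v \<in> V \<and> c v = \<chi> - n"
  by (cases n) auto

lemma arc_rem:
  "A v u \<Longrightarrow> u \<in> remaining A V n \<Longrightarrow> v \<in> V \<Longrightarrow> v \<in> remaining A V (Suc n)"
proof (induction n arbitrary: u)
  case 0 then show ?case by (auto simp: sinks_in_def)
next
  case (Suc n)
  have "u \<in> remaining A V n" using Suc.prems(2) by simp
  then have "v \<in> remaining A V (Suc n)" using Suc.IH Suc.prems by blast
  then show ?case using Suc.prems by (auto simp: sinks_in_def)
qed

lemma W_rem:
  assumes pc: "proper_coloring V E \<chi> c"
  shows "v \<in> W E V \<chi> c n \<Longrightarrow> v \<in> remaining (Dc_arc E \<chi> c) V n"
proof (induction n arbitrary: v)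
  case 0 then show ?case by simp
next
  case (Suc n)
  from Suc.prems obtain u where v: "v \<in> V" "c v = \<chi> - Suc n" "u \<in> W E V \<chi> c n" "E v u" by auto
  have u: "u \<in> V" "c u = \<chi> - n" using W_sub[OF v(3)] by auto
  have "c v \<ge> 1" using pc v(1) by (auto simp: proper_coloring_def)
  then have "c u = c v + 1" using u v by simp
  then have "Dc_arc E \<chi> c v u" using v(4) by (simp add: Dc_arc_def)
  then show ?case using arc_rem Suc.IH[OF v(3)] v(1) by metis
qed

lemma W_nonempty:
  assumes g: "graph V E" and ne: "V \<noteq> {}" and pc: "proper_coloring V E \<chi> c"
    and chi: "\<chi> = chromatic_number V E"
  shows "W E V \<chi> c (\<chi> - 1) \<noteq> {}"
proof
  assume emp: "W E V \<chi> c (\<chi> - 1) = {}"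
  define c' where "c' v = (if v \<in> W E V \<chi> c (\<chi> - c v) then c v - 1 else c v)" for v
  have rng: "\<forall>v\<in>V. c v \<in> {1..\<chi>}" using pc by (simp add: proper_coloring_def)
  have Esym: "\<And>u v. E u v \<Longrightarrow> E v u" and EV: "\<And>u v. E u v \<Longrightarrow> u \<in> V \<and> v \<in> V"
    using g by (auto simp: graph_def)
  have sh2: "c v \<ge> 2" if "v \<in> V" "v \<in> W E V \<chi> c (\<chi> - c v)" for v
  proof (rule ccontr)
    assume "\<not> c v \<ge> 2"
    then have "c v = 1" using rng that by force
    then show False using that emp by simp
  qed
  have key: "c u - 1 \<noteq> c v" if "E u v" "u \<in> W E V \<chi> c (\<chi> - c u)" "v \<notin> W E V \<chi> c (\<chi> - c v)" for u v
  proof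
    assume eq: "c u - 1 = c v"
    have uv: "u \<in> V" "v \<in> V" using EV that(1) by auto
    have cu: "c u \<ge> 2" "c u \<le> \<chi>" using sh2 uv that(2) rng by auto
    have e1: "\<chi> - c v = Suc (\<chi> - c u)" using eq cu by simp
    have e2: "c v = \<chi> - Suc (\<chi> - c u)" using eq cu by simp
    have "v \<in> W E V \<chi> c (Suc (\<chi> - c u))" using uv(2) e2 that(2) Esym[OF that(1)] by auto
    then show False using that(3) e1 by simp
  qed
  have "proper_coloring V E (\<chi> - 1) c'"
    unfolding proper_coloring_def
  proof (intro conjI ballI allI impI)
    fix v assume v: "v \<in> V"
    show "c' v \<in> {1..\<chi> - 1}"
    proof (cases "v \<in> W E V \<chi> c (\<chi> - c v)")
      case True
      then show ?thesis using sh2[OF v True] rng v by (auto simp: c'_def)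
    next
      case False
      have "c v \<noteq> \<chi>" using False v by auto
      then show ?thesis using False rng v by (auto simp: c'_def)
    qed
  next
    fix u v assume e: "E u v"
    have uv: "u \<in> V" "v \<in> V" using EV e by auto
    have d: "c u \<noteq> c v" using pc e by (simp add: proper_coloring_def)
    show "c' u \<noteq> c' v"
      using key[OF e] key[OF Esym[OF e]] d rng[rule_format, OF uv(1)] rng[rule_format, OF uv(2)]
      by (auto simp: c'_def)
  qed
  then have "chromatic_number V E \<le> \<chi> - 1"
    unfolding chromatic_number_def by (blast intro: Least_le)
  then have "\<chi> = 0" using chi by simp
  then show False using rng ne by auto
qed

theorem lemma7:
  fixes V :: "'a set" and E :: "'a \<Rightarrow> 'a \<Rightarrow> bool" and c :: "'a \<Rightarrow> nat" and \<chi> :: nat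
  assumes "connected_graph V E"
    and "\<chi> = chromatic_number V E"
    and "nice_coloring V E \<chi> c"
  shows "{x \<in> V. \<not> (\<exists>p. colorful_path_from V E \<chi> c x p)}
           \<subseteq> (\<Union>i\<in>{2..\<chi> - 1}. level (Dc_arc E \<chi> c) V i)"
proof
  let ?A = "Dc_arc E \<chi> c"
  have g: "graph V E" and ne: "V \<noteq> {}" using assms(1) by (auto simp: connected_graph_def)
  have fin: "finite V" using g by (simp add: graph_def)
  have Esym: "\<And>u v. E u v \<Longrightarrow> E v u" using g by (auto simp: graph_def)
  have pc: "proper_coloring V E \<chi> c"
    and acy: "acyclic {(a, b). a \<in> V \<and> b \<in> V \<and> ?A a b}"
    and one: "card (sinks_in ?A V) = 1" using assms(3) by (auto simp: nice_coloring_def)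
  have chi1: "\<chi> \<ge> 1"
  proof (rule ccontr)
    assume "\<not> \<chi> \<ge> 1"
    then have "\<chi> = 0" by simp
    moreover obtain v where "v \<in> V" using ne by blast
    ultimately show False using pc by (auto simp: proper_coloring_def)
  qed
  fix x assume "x \<in> {x \<in> V. \<not> (\<exists>p. colorful_path_from V E \<chi> c x p)}"
  then have xV: "x \<in> V" and nop: "\<And>p. \<not> colorful_path_from V E \<chi> c x p" by auto
  have "x \<in> remaining ?A V 0" using xV by simp
  then obtain i where i: "0 < i" "x \<in> level ?A V i"
    using find_level eventually_out[OF fin acy] by metis
  have mk: "colorful_path_from V E \<chi> c (hd q) q \<and> colorful_path_from V E \<chi> c (hd (rev q)) (rev q)"
    if len: "length q = \<chi>" and mm: "m \<ge> \<chi>"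
      and lv: "\<forall>j<\<chi>. q ! j \<in> level ?A V (m - j)"
      and arcs: "\<forall>j. Suc j < length q \<longrightarrow> ?A (q ! j) (q ! Suc j)" for q m
  proof -
    note gp = good_path[OF pc len mm lv arcs]
    have qne: "q \<noteq> []" using len chi1 by auto
    have e2: "E (rev q ! j) (rev q ! Suc j)" if "Suc j < length (rev q)" for j
    proof -
      have "E (q ! (length q - Suc (Suc j))) (q ! Suc (length q - Suc (Suc j)))"
        using gp(4) that by simp
      moreover have "Suc (length q - Suc (Suc j)) = length q - Suc j" using that by simp
      ultimately have "E (q ! (length q - Suc j)) (q ! (length q - Suc (Suc j)))"
        using Esym by simp
      then show ?thesis using that by (simp add: rev_nth)
    qed
    show ?thesis
      unfolding colorful_path_from_def using gp len qne e2
      by (simp add: rev_map[symmetric])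
  qed
  have notbig: "\<not> i \<ge> \<chi>"
  proof
    assume ib: "i \<ge> \<chi>"
    obtain p where p: "length p = i" "hd p = x" "\<forall>j<i. p ! j \<in> level ?A V (i - j)"
      "\<forall>j. Suc j < i \<longrightarrow> ?A (p ! j) (p ! Suc j)" using chain[OF i(2)] i(1) by auto
    let ?q = "take \<chi> p"
    have "length ?q = \<chi>" using p(1) ib by simp
    moreover have "\<forall>j<\<chi>. ?q ! j \<in> level ?A V (i - j)" using p(3) ib by simp
    moreover have "\<forall>j. Suc j < length ?q \<longrightarrow> ?A (?q ! j) (?q ! Suc j)" using p(4) ib p(1) by simp
    ultimately have "colorful_path_from V E \<chi> c (hd ?q) ?q" using mk ib by blast
    moreover have "hd ?q = x" using p(2) p(1) ib chi1 by (cases p) auto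
    ultimately show False using nop by metis
  qed
  have notone: "i \<noteq> 1"
  proof
    assume i1: "i = 1"
    have sx: "sinks_in ?A V = {x}"
    proof -
      have "x \<in> sinks_in ?A V" using i(2) i1 by (simp add: level_def)
      then show ?thesis using one by (metis card_1_singletonE singletonD)
    qed
    obtain v where v: "v \<in> W E V \<chi> c (\<chi> - 1)" using W_nonempty[OF g ne pc assms(2)] by blast
    have "v \<in> remaining ?A V (\<chi> - 1)" using W_rem[OF pc v] .
    then obtain j where j: "\<chi> - 1 < j" "v \<in> level ?A V j"
      using find_level eventually_out[OF fin acy] by metis
    obtain p where p: "length p = j" "\<forall>k<j. p ! k \<in> level ?A V (j - k)"
      using chain[OF j(2)] j(1) by auto
    have jj: "j - \<chi> < j" "j - (j - \<chi>) = \<chi>" using j(1) chi1 by auto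
    have "p ! (j - \<chi>) \<in> level ?A V (j - (j - \<chi>))" using p(2) jj(1) by blast
    then have z: "p ! (j - \<chi>) \<in> level ?A V \<chi>" using j(1) by simp
    obtain q where q: "length q = \<chi>" "\<forall>k<\<chi>. q ! k \<in> level ?A V (\<chi> - k)"
      "\<forall>k. Suc k < \<chi> \<longrightarrow> ?A (q ! k) (q ! Suc k)" using chain[OF z chi1] by auto
    have cp: "colorful_path_from V E \<chi> c (hd (rev q)) (rev q)"
      using mk[of q \<chi>] q by simp
    have qq: "\<chi> - 1 < \<chi>" "\<chi> - (\<chi> - 1) = 1" using chi1 by auto
    have "q ! (\<chi> - 1) \<in> level ?A V (\<chi> - (\<chi> - 1))" using q(2) qq(1) by blast
    then have "q ! (\<chi> - 1) \<in> level ?A V 1" using qq(2) by simp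
    then have "q ! (\<chi> - 1) = x" using sx by (simp add: level_def)
    moreover have "q \<noteq> []" using q(1) chi1 by auto
    then have "hd (rev q) = q ! (\<chi> - 1)" using q(1) by (simp add: hd_rev last_conv_nth)
    ultimately show False using cp nop by metis
  qed
  have "i \<in> {2..\<chi> - 1}" using i(1) notbig notone by simp
  then show "x \<in> (\<Union>i\<in>{2..\<chi> - 1}. level ?A V i)" using i(2) by blast
qed

end
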